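(* For positive integers $n,r,k$ with $n\ge 2(k+r)$, $$\gamma_k(K(n,r))\ \ge\ \gamma_k(K(n+1,r)).$$
   Context: For integers $n\ge 2r$, the Kneser graph $K(n,r)$ has as vertices the $r$-element subsets of $[n]=\{1,\dots,n\}$, two vertices being adjacent iff they are disjoint. For a graph $G$ and positive integer $k$, a set $D\subseteq V(G)$ is $k$-dominating if every vertex $u\in V(G)\setminus D$ has at least $k$ neighbors in $D$; $\gamma_k(G)$ is the minimum cardinality of a $k$-dominating set. *)

theory Defs
  imports Main
begin

definition kneser_vertices :: "nat \<Rightarrow> nat \<Rightarrow> nat set set" where
  "kneser_vertices n r = {A. A \<subseteq> {1..n} \<and> card A = r}"

definition kneser_adj :: "nat set \<Rightarrow> nat set \<Rightarrow> bool" where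
  "kneser_adj A B \<longleftrightarrow> A \<inter> B = {}"

definition k_dominating :: "'a set \<Rightarrow> ('a \<Rightarrow> 'a \<Rightarrow> bool) \<Rightarrow> nat \<Rightarrow> 'a set \<Rightarrow> bool" where
  "k_dominating V adj k D \<longleftrightarrow> D \<subseteq> V \<and>
     (\<forall>u \<in> V - D. card {v \<in> D. adj u v} \<ge> k)"

definition k_domination_number :: "'a set \<Rightarrow> ('a \<Rightarrow> 'a \<Rightarrow> bool) \<Rightarrow> nat \<Rightarrow> nat" where
  "k_domination_number V adj k = (LEAST m. \<exists>D. k_dominating V adj k D \<and> card D = m)"

abbreviation gamma_kneser :: "nat \<Rightarrow> nat \<Rightarrow> nat \<Rightarrow> nat" where
  "gamma_kneser k n r \<equiv> k_domination_number (kneser_vertices n r) kneser_adj k"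

end

theory Submission
  imports Defs
begin

lemma fin_V: "finite (kneser_vertices n r)"
proof -
  have "kneser_vertices n r \<subseteq> Pow {1..n}" unfolding kneser_vertices_def by auto
  thus ?thesis by (rule finite_subset) simp
qed

lemma gamma_attained:
  "\<exists>D. k_dominating (kneser_vertices n r) kneser_adj k D \<and>
       card D = gamma_kneser k n r"
proof -
  have "k_dominating (kneser_vertices n r) kneser_adj k (kneser_vertices n r)"
    unfolding k_dominating_def by auto
  hence "\<exists>m D. k_dominating (kneser_vertices n r) kneser_adj k D \<and> card D = m" by blast
  thus ?thesis unfolding k_domination_number_def by (rule LeastI_ex)
qed

lemma gamma_le:
  "k_dominating V adj k D \<Longrightarrow> k_domination_number V adj k \<le> card D"
  unfolding k_domination_number_def by (rule Least_le) blast

lemma star_reduce: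
  fixes n r k :: nat
  assumes D: "k_dominating (kneser_vertices n r) kneser_adj k D"
    and r: "r > 0" and nk: "n \<ge> 2 * (k + r)"
    and A0: "A0 \<subseteq> {1..n}" "card A0 = r - 1"
    and star: "\<forall>x\<in>{1..n} - A0. insert x A0 \<in> D"
  shows "\<exists>D1. k_dominating (kneser_vertices n r) kneser_adj k D1 \<and> card D1 < card D"
proof -
  let ?V = "kneser_vertices n r"
  have DV: "D \<subseteq> ?V" and Ddom: "\<forall>u \<in> ?V - D. card {v \<in> D. kneser_adj u v} \<ge> k"
    using D unfolding k_dominating_def by auto
  have finD: "finite D" using DV fin_V finite_subset by blast
  have finA0: "finite A0" using A0(1) finite_subset by blast
  define W where "W = {1..n} - A0"
  have cardW: "card W = n - (r - 1)" unfolding W_def using A0 by (simp add: card_Diff_subset finA0)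
  have cW2: "card W + r = n + 1" and rn: "r \<le> n" using cardW r nk by auto
  have nk': "2*k + 2*r \<le> n" using nk by simp
  have finW: "finite W" unfolding W_def by simp
  have "card W \<ge> k + 1" using nk' cW2 by linarith
  then obtain X where X: "X \<subseteq> W" "card X = k + 1"
    by (meson obtain_subset_with_card_n)
  have finX: "finite X" using X(1) finW finite_subset by blast
  define W' where "W' = W - X"
  have cardW': "card W' = card W - (k+1)" unfolding W'_def using X finX by (simp add: card_Diff_subset)
  have finW': "finite W'" unfolding W'_def using finW by simp
  have "card W' \<ge> r - 1" using cardW' nk' cW2 by linarith
  then obtain Y where Y: "Y \<subseteq> W'" "card Y = r - 1"
    by (meson obtain_subset_with_card_n)
  have finY: "finite Y" using Y(1) finW' finite_subset by blast
  have "card (W' - Y) = card W' - (r - 1)" using Y finY by (simp add: card_Diff_subset)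
  hence "card (W' - Y) \<ge> k" using cardW' nk' cW2 by linarith
  then obtain Z where Z: "Z \<subseteq> W' - Y" "card Z = k"
    by (meson obtain_subset_with_card_n)
  have finZ: "finite Z" using Z(1) finW' finite_subset by blast
  define T where "T = (\<lambda>z. insert z Y) ` Z"
  have injT: "inj_on (\<lambda>z. insert z Y) Z"
  proof (rule inj_onI)
    fix a b assume "a \<in> Z" "b \<in> Z" "insert a Y = insert b Y"
    moreover have "a \<notin> Y" "b \<notin> Y" using Z \<open>a \<in> Z\<close> \<open>b \<in> Z\<close> by auto
    ultimately show "a = b" by (metis insertE insertI1)
  qed
  have cardT: "card T = k" unfolding T_def using card_image[OF injT] Z by simp
  have finT: "finite T" unfolding T_def using finZ by simp
  define R where "R = (\<lambda>x. insert x A0) ` X"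
  have injR: "\<And>S. S \<subseteq> W \<Longrightarrow> inj_on (\<lambda>x. insert x A0) S"
  proof -
    fix S assume S: "S \<subseteq> W"
    show "inj_on (\<lambda>x. insert x A0) S"
    proof (rule inj_onI)
      fix a b assume "a \<in> S" "b \<in> S" "insert a A0 = insert b A0"
      moreover have "a \<notin> A0" "b \<notin> A0" using S \<open>a \<in> S\<close> \<open>b \<in> S\<close> unfolding W_def by auto
      ultimately show "a = b" by (metis insertE insertI1)
    qed
  qed
  have cardR: "card R = k + 1" unfolding R_def using card_image[OF injR[OF X(1)]] X by simp
  have RD: "R \<subseteq> D" unfolding R_def using star X(1) unfolding W_def by auto
  define D1 where "D1 = (D - R) \<union> T"
  have finD1: "finite D1" unfolding D1_def using finD finT by simp
  have "card D1 \<le> card (D - R) + card T" unfolding D1_def by (rule card_Un_le)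
  also have "card (D - R) = card D - (k+1)" using RD finD cardR by (simp add: card_Diff_subset finite_subset)
  also have "card D \<ge> k + 1" using RD finD cardR card_mono by metis
  hence "card D - (k+1) + card T < card D" using cardT by linarith
  finally have lt: "card D1 < card D" .
  have TV: "T \<subseteq> ?V"
  proof
    fix t assume "t \<in> T"
    then obtain z where z: "z \<in> Z" "t = insert z Y" unfolding T_def by auto
    have "z \<notin> Y" using z Z by auto
    hence "card t = r" using z Y finY r by simp
    moreover have "t \<subseteq> {1..n}" using z Z Y unfolding W'_def W_def by auto
    ultimately show "t \<in> ?V" unfolding kneser_vertices_def by simp
  qed
  have dom1: "k_dominating ?V kneser_adj k D1"
    unfolding k_dominating_def
  proof (intro conjI ballI)
    show "D1 \<subseteq> ?V" unfolding D1_def using DV TV by auto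
  next
    fix u assume u: "u \<in> ?V - D1"
    have uV: "u \<subseteq> {1..n}" "card u = r" using u unfolding kneser_vertices_def by auto
    have finu: "finite u" using uV(1) finite_subset by blast
    show "card {v \<in> D1. kneser_adj u v} \<ge> k"
    proof (cases "u \<in> D")
      case True
      then have "u \<in> R" using u unfolding D1_def by auto
      then obtain x where x: "x \<in> X" "u = insert x A0" unfolding R_def by auto
      have "T \<subseteq> {v \<in> D1. kneser_adj u v}"
      proof
        fix t assume "t \<in> T"
        then obtain z where z: "z \<in> Z" "t = insert z Y" unfolding T_def by auto
        have "t \<subseteq> W'" using z Z Y by auto
        hence "u \<inter> t = {}" using x X unfolding W'_def W_def by auto
        thus "t \<in> {v \<in> D1. kneser_adj u v}" using \<open>t \<in> T\<close> unfolding D1_def kneser_adj_def by auto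
      qed
      hence "card T \<le> card {v \<in> D1. kneser_adj u v}" using finD1 by (intro card_mono) auto
      thus ?thesis using cardT by simp
    next
      case False
      hence uVD: "u \<in> ?V - D" using u by auto
      show ?thesis
      proof (cases "u \<inter> A0 = {}")
        case False
        have "{v \<in> D. kneser_adj u v} \<subseteq> {v \<in> D1. kneser_adj u v}"
        proof
          fix v assume v: "v \<in> {v \<in> D. kneser_adj u v}"
          have "v \<notin> R" using v False unfolding R_def kneser_adj_def by auto
          thus "v \<in> {v \<in> D1. kneser_adj u v}" using v unfolding D1_def by auto
        qed
        hence "card {v \<in> D. kneser_adj u v} \<le> card {v \<in> D1. kneser_adj u v}"
          using finD1 by (intro card_mono) auto
        thus ?thesis using Ddom uVD by force
      next
        case True
        define S where "S = W - X - u"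
        have "card (W - X) = card W - (k+1)" using X finX by (simp add: card_Diff_subset)
        moreover have "card (W - X) - card u \<le> card S" unfolding S_def
          using finu by (rule diff_card_le_card_Diff)
        ultimately have cS: "card S \<ge> k" using nk' uV(2) cW2 by linarith
        have "(\<lambda>x. insert x A0) ` S \<subseteq> {v \<in> D1. kneser_adj u v}"
        proof
          fix v assume "v \<in> (\<lambda>x. insert x A0) ` S"
          then obtain x where x: "x \<in> S" "v = insert x A0" by auto
          have "v \<in> D" using star x unfolding S_def W_def by auto
          moreover have "v \<notin> R"
          proof
            assume "v \<in> R"
            then obtain y where y: "y \<in> X" "v = insert y A0" unfolding R_def by auto
            have "x \<notin> A0" "y \<notin> A0" using x y X unfolding S_def W_def by auto
            hence "x = y" using x y by (metis insertE insertI1)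
            thus False using x y unfolding S_def by auto
          qed
          moreover have "u \<inter> v = {}" using True x unfolding S_def by auto
          ultimately show "v \<in> {v \<in> D1. kneser_adj u v}" unfolding D1_def kneser_adj_def by auto
        qed
        hence "card ((\<lambda>x. insert x A0) ` S) \<le> card {v \<in> D1. kneser_adj u v}"
          using finD1 by (intro card_mono) auto
        moreover have "card ((\<lambda>x. insert x A0) ` S) = card S"
          by (rule card_image[OF injR]) (auto simp: S_def)
        ultimately show ?thesis using cS by simp
      qed
    qed
  qed
  show ?thesis using dom1 lt by blast
qed

theorem theorem2p3:
  fixes n r k :: nat
  assumes "n > 0" and "r > 0" and "k > 0" and "n \<ge> 2 * (k + r)"
  shows "gamma_kneser k n r \<ge> gamma_kneser k (n + 1) r"
proof -
  let ?V = "kneser_vertices n r"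
  let ?V1 = "kneser_vertices (n+1) r"
  obtain D where D: "k_dominating ?V kneser_adj k D" and cD: "card D = gamma_kneser k n r"
    using gamma_attained by blast
  have DV: "D \<subseteq> ?V" and Ddom: "\<forall>u \<in> ?V - D. card {v \<in> D. kneser_adj u v} \<ge> k"
    using D unfolding k_dominating_def by auto
  have finD: "finite D" using DV fin_V finite_subset by blast
  have VV1: "?V \<subseteq> ?V1" unfolding kneser_vertices_def by auto
  have "k_dominating ?V1 kneser_adj k D"
    unfolding k_dominating_def
  proof (intro conjI ballI)
    show "D \<subseteq> ?V1" using DV VV1 by auto
  next
    fix u assume u: "u \<in> ?V1 - D"
    have uV: "u \<subseteq> {1..n+1}" "card u = r" using u unfolding kneser_vertices_def by auto
    have finu: "finite u" using uV(1) finite_subset by blast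
    show "card {v \<in> D. kneser_adj u v} \<ge> k"
    proof (cases "n + 1 \<in> u")
      case False
      have "u \<subseteq> {1..n}"
      proof
        fix x assume "x \<in> u"
        hence "1 \<le> x" "x \<le> n + 1" "x \<noteq> n + 1" using uV(1) False by auto
        thus "x \<in> {1..n}" by auto
      qed
      hence "u \<in> ?V - D" using u uV(2) unfolding kneser_vertices_def by auto
      thus ?thesis using Ddom by blast
    next
      case True
      define A0 where "A0 = u - {n+1}"
      have A0s: "A0 \<subseteq> {1..n}" using uV(1) unfolding A0_def by auto
      have cA0: "card A0 = r - 1" unfolding A0_def using True finu uV(2) by simp
      have uA0: "u = insert (n+1) A0" unfolding A0_def using True by auto
      have "\<exists>x\<in>{1..n} - A0. insert x A0 \<notin> D"
      proof (rule ccontr)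
        assume "\<not> ?thesis"
        hence "\<forall>x\<in>{1..n} - A0. insert x A0 \<in> D" by blast
        then obtain D1 where "k_dominating ?V kneser_adj k D1" "card D1 < card D"
          using star_reduce[OF D \<open>r > 0\<close> assms(4) A0s cA0] by blast
        with gamma_le[of ?V kneser_adj k D1] cD show False by simp
      qed
      then obtain x where x: "x \<in> {1..n} - A0" "insert x A0 \<notin> D" by blast
      have finA0: "finite A0" using A0s finite_subset by blast
      have "card (insert x A0) = r" using x cA0 finA0 \<open>r > 0\<close> by simp
      hence B: "insert x A0 \<in> ?V - D" using x A0s unfolding kneser_vertices_def by auto
      have "{v \<in> D. kneser_adj (insert x A0) v} \<subseteq> {v \<in> D. kneser_adj u v}"
      proof
        fix v assume v: "v \<in> {v \<in> D. kneser_adj (insert x A0) v}"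
        have "v \<subseteq> {1..n}" using v DV unfolding kneser_vertices_def by auto
        hence "n + 1 \<notin> v" by auto
        thus "v \<in> {v \<in> D. kneser_adj u v}" using v uA0 unfolding kneser_adj_def by auto
      qed
      hence "card {v \<in> D. kneser_adj (insert x A0) v} \<le> card {v \<in> D. kneser_adj u v}"
        using finD by (intro card_mono) auto
      moreover have "k \<le> card {v \<in> D. kneser_adj (insert x A0) v}" using Ddom B by blast
      ultimately show ?thesis by linarith
    qed
  qed
  hence "gamma_kneser k (n+1) r \<le> card D" by (rule gamma_le)
  thus ?thesis using cD by simp
qed

end
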